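(* For every positive integer $d$, every graph $G$ that is isomorphic to the intersection graph of a finite collection of closed balls in $\mathbb{R}^d$ has minimum degree at most $(2\tau(G)+1)\cdot 3^d$. In particular, the class of intersection graphs of balls in $\mathbb{R}^d$ is degree-bounded with degree-bounding function $f_d(\tau)=(2\tau+1)3^d$.
   Context: The intersection graph of a finite collection $\mathcal{B}$ of sets has vertex set $\mathcal{B}$, two distinct members being adjacent if they intersect. A closed ball in $\mathbb{R}^d$ is a set $\{x:\|x-p\|_2\le r\}$ with $r>0$. The biclique number $\tau(G)$ is the largest $t$ such that $G$ has a (not necessarily induced) subgraph isomorphic to $K_{t,t}$. A class $\mathcal{F}$ is degree-bounded with degree-bounding function $f$ if $\delta(G)\le f(\tau(G))$ for all $G\in\mathcal{F}$, where $\delta$ is minimum degree. *)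

theory Defs
  imports "HOL-Analysis.Analysis"
begin

definition simple_graph :: "'v set \<Rightarrow> ('v \<Rightarrow> 'v \<Rightarrow> bool) \<Rightarrow> bool" where
  "simple_graph V E \<longleftrightarrow> finite V \<and> (\<forall>u\<in>V. \<forall>v\<in>V. E u v \<longleftrightarrow> E v u) \<and> (\<forall>v\<in>V. \<not> E v v)"

definition degree :: "'v set \<Rightarrow> ('v \<Rightarrow> 'v \<Rightarrow> bool) \<Rightarrow> 'v \<Rightarrow> nat" where
  "degree V E v = card {u\<in>V. E v u}"

definition min_degree :: "'v set \<Rightarrow> ('v \<Rightarrow> 'v \<Rightarrow> bool) \<Rightarrow> nat" where
  "min_degree V E = Min (degree V E ` V)"

definition has_biclique :: "'v set \<Rightarrow> ('v \<Rightarrow> 'v \<Rightarrow> bool) \<Rightarrow> nat \<Rightarrow> bool" where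
  "has_biclique V E t \<longleftrightarrow> (\<exists>A B. A \<subseteq> V \<and> B \<subseteq> V \<and> A \<inter> B = {} \<and>
      card A = t \<and> card B = t \<and> (\<forall>a\<in>A. \<forall>b\<in>B. E a b))"

definition biclique_number :: "'v set \<Rightarrow> ('v \<Rightarrow> 'v \<Rightarrow> bool) \<Rightarrow> nat" where
  "biclique_number V E = Max {t. has_biclique V E t}"

definition closed_ball_set :: "'a::euclidean_space set \<Rightarrow> bool" where
  "closed_ball_set S \<longleftrightarrow> (\<exists>p r. r > 0 \<and> S = cball p r)"

definition iso_intersection_graph ::
  "'v set \<Rightarrow> ('v \<Rightarrow> 'v \<Rightarrow> bool) \<Rightarrow> 'a set set \<Rightarrow> bool" where
  "iso_intersection_graph V E \<B> \<longleftrightarrow> finite \<B> \<and>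
     (\<exists>f. bij_betw f V \<B> \<and> (\<forall>u\<in>V. \<forall>v\<in>V. u \<noteq> v \<longrightarrow> (E u v \<longleftrightarrow> f u \<inter> f v \<noteq> {})))"

end

theory Submission
  imports Defs
begin


lemma geo:
  fixes c p :: "'a::euclidean_space"
  assumes r: "r > 0" and R: "R \<ge> r" and d: "dist c p \<le> R + r"
  shows "\<exists>q. dist p q \<le> 2*r \<and> cball q r \<subseteq> cball c R"
proof (cases "dist c p \<le> R - r")
  case True
  have "cball p r \<subseteq> cball c R"
  proof
    fix x assume "x \<in> cball p r"
    then have "dist p x \<le> r" by simp
    then have "dist c x \<le> R" using True dist_triangle[of c x p] by linarith
    then show "x \<in> cball c R" by simp
  qed
  then show ?thesis using r by (intro exI[of _ p]) auto
next
  case False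
  define D where "D = dist c p"
  have Dpos: "D > 0" using False R D_def by auto
  define t where "t = (R - r) / D"
  have t0: "t \<ge> 0" and t1: "t \<le> 1" using Dpos R False unfolding t_def D_def by auto
  define q where "q = c + t *\<^sub>R (p - c)"
  have "dist c q = t * D" unfolding q_def D_def dist_norm using t0
    by (simp add: dist_norm norm_minus_commute)
  moreover have "t * D = R - r" using Dpos unfolding t_def by simp
  ultimately have cq: "dist c q = R - r" by simp
  have "p - q = (1 - t) *\<^sub>R (p - c)" unfolding q_def by (simp add: algebra_simps)
  then have "dist p q = (1 - t) * D" using t1 unfolding D_def
    by (simp add: dist_norm norm_minus_commute)
  also have "\<dots> = D - t * D" by (simp add: algebra_simps)
  also have "\<dots> = D - (R - r)" using Dpos unfolding t_def by simp
  also have "\<dots> \<le> 2 * r" using d D_def by simp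
  finally have pq: "dist p q \<le> 2*r" .
  have "cball q r \<subseteq> cball c R"
  proof
    fix x assume "x \<in> cball q r"
    then have "dist q x \<le> r" by simp
    then have "dist c x \<le> R" using cq dist_triangle[of c x q] by linarith
    then show "x \<in> cball c R" by simp
  qed
  then show ?thesis using pq by blast
qed

lemma vol:
  fixes q :: "'x \<Rightarrow> 'a::euclidean_space"
  assumes fin: "finite N" and r: "r > 0"
    and near: "\<forall>u\<in>N. dist p (q u) \<le> 2*r"
    and k: "\<And>x. card {u\<in>N. x \<in> cball (q u) r} \<le> k"
  shows "card N \<le> k * 3 ^ DIM('a)"
proof -
  let ?w = "unit_ball_vol (DIM('a))"
  have wpos: "?w > 0" by simp
  have sub: "cball (q u) r \<subseteq> cball p (3*r)" if "u \<in> N" for u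
  proof
    fix x assume "x \<in> cball (q u) r"
    then have "dist (q u) x \<le> r" by simp
    then show "x \<in> cball p (3*r)" using near that dist_triangle[of p x "q u"] by auto
  qed
  have pt: "(\<Sum>u\<in>N. indicator (cball (q u) r) x) \<le> real k * indicator (cball p (3*r)) x" for x :: 'a
  proof -
    have "(\<Sum>u\<in>N. indicator (cball (q u) r) x :: real) = (\<Sum>u\<in>N. if x \<in> cball (q u) r then 1 else 0)"
      by (intro sum.cong) (auto simp: indicator_def)
    also have "\<dots> = real (card {u\<in>N. x \<in> cball (q u) r})"
      using fin by (simp add: sum.If_cases Int_def conj_commute)
    finally have eq: "(\<Sum>u\<in>N. indicator (cball (q u) r) x :: real) = real (card {u\<in>N. x \<in> cball (q u) r})" .
    show ?thesis
    proof (cases "x \<in> cball p (3*r)")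
      case True then show ?thesis using eq k[of x] by simp
    next
      case False
      then have "{u\<in>N. x \<in> cball (q u) r} = {}" using sub by blast
      then show ?thesis using eq False by simp
    qed
  qed
  have int1: "integrable lborel (indicator (cball (q u) r) :: 'a \<Rightarrow> real)" for u
    using emeasure_lborel_cball_finite by (simp add: integrable_indicator_iff)
  have int2: "integrable lborel (indicator (cball p (3*r)) :: 'a \<Rightarrow> real)"
    using emeasure_lborel_cball_finite by (simp add: integrable_indicator_iff)
  have "(LINT x|lborel. (\<Sum>u\<in>N. indicator (cball (q u) r) x)) \<le> (LINT x|lborel. real k * indicator (cball p (3*r)) x)"
    apply (rule integral_mono)
    using int1 int2 pt by auto
  also have "(LINT x|lborel. (\<Sum>u\<in>N. indicator (cball (q u) r) x)) = (\<Sum>u\<in>N. measure lborel (cball (q u) r))"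
    using int1 by (subst Bochner_Integration.integral_sum) auto
  also have "(LINT x|lborel. real k * indicator (cball p (3*r)) x) = real k * measure lborel (cball p (3*r))"
    by simp
  finally have "real (card N) * (?w * r ^ DIM('a)) \<le> real k * (?w * (3*r) ^ DIM('a))"
    using r by (simp add: content_cball)
  then have "real (card N) * (?w * r ^ DIM('a)) \<le> (real k * 3 ^ DIM('a)) * (?w * r ^ DIM('a))"
    by (simp add: power_mult_distrib algebra_simps)
  then have "real (card N) \<le> real k * 3 ^ DIM('a)"
    using wpos r by (simp add: mult_le_cancel_right)
  then show ?thesis by (metis of_nat_le_iff of_nat_mult of_nat_numeral of_nat_power)
qed

lemma clique_bound:
  assumes sg: "simple_graph V E" and KV: "K \<subseteq> V"
    and cl: "\<forall>u\<in>K. \<forall>w\<in>K. u \<noteq> w \<longrightarrow> E u w"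
  shows "card K \<le> 2 * biclique_number V E + 1"
proof (rule ccontr)
  assume neg: "\<not> card K \<le> 2 * biclique_number V E + 1"
  define t where "t = biclique_number V E"
  have finV: "finite V" using sg by (simp add: simple_graph_def)
  have finK: "finite K" using finV KV finite_subset by blast
  have cK: "card K \<ge> 2 * t + 2" using neg t_def by simp
  obtain A where A: "A \<subseteq> K" "card A = t + 1"
  proof -
    have "t + 1 \<le> card K" using cK by simp
    then show ?thesis by (rule obtain_subset_with_card_n) (rule that)
  qed
  have "card (K - A) = card K - card A" using A finK by (simp add: card_Diff_subset finite_subset)
  then have "card (K - A) \<ge> t + 1" using A cK by simp
  then obtain B where B: "B \<subseteq> K - A" "card B = t + 1"
    by (rule obtain_subset_with_card_n)
  have AB: "\<forall>a\<in>A. \<forall>b\<in>B. E a b"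
  proof (intro ballI)
    fix a b assume a: "a \<in> A" and b: "b \<in> B"
    then have "a \<noteq> b" using B(1) by auto
    moreover have "a \<in> K" "b \<in> K" using a b A(1) B(1) by auto
    ultimately show "E a b" using cl by blast
  qed
  have AV: "A \<subseteq> V" using A(1) KV by blast
  have BV: "B \<subseteq> V" using B(1) KV by blast
  have ABd: "A \<inter> B = {}" using B(1) by blast
  have hb: "has_biclique V E (t+1)" unfolding has_biclique_def
    using AV BV ABd A(2) B(2) AB by blast
  have fin: "finite {t. has_biclique V E t}"
  proof (rule finite_subset[of _ "{..card V}"])
    show "{t. has_biclique V E t} \<subseteq> {..card V}"
    proof
      fix s assume "s \<in> {t. has_biclique V E t}"
      then obtain A' where "A' \<subseteq> V" "card A' = s" unfolding has_biclique_def by blast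
      then show "s \<in> {..card V}" using card_mono[OF finV] by auto
    qed
  qed simp
  have "t + 1 \<le> biclique_number V E" unfolding biclique_number_def
    using Max_ge[OF fin] hb by simp
  then show False using t_def by simp
qed

theorem mainTheorem11:
  fixes V :: "'v set" and E :: "'v \<Rightarrow> 'v \<Rightarrow> bool"
    and \<B> :: "'a::euclidean_space set set"
  assumes "simple_graph V E"
    and "V \<noteq> {}"
    and "\<forall>S\<in>\<B>. closed_ball_set S"
    and "iso_intersection_graph V E \<B>"
  shows "min_degree V E \<le> (2 * biclique_number V E + 1) * 3 ^ DIM('a)"
proof -
  have finV: "finite V" using assms(1) by (simp add: simple_graph_def)
  have irr: "\<forall>v\<in>V. \<not> E v v" using assms(1) by (simp add: simple_graph_def)
  obtain f where bij: "bij_betw f V \<B>"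
    and adj: "\<forall>u\<in>V. \<forall>v\<in>V. u \<noteq> v \<longrightarrow> (E u v \<longleftrightarrow> f u \<inter> f v \<noteq> {})"
    using assms(4) unfolding iso_intersection_graph_def by blast
  have "\<forall>v\<in>V. \<exists>pr. snd pr > 0 \<and> f v = cball (fst pr) (snd pr)"
    using bij assms(3) unfolding bij_betw_def closed_ball_set_def by fastforce
  from bchoice[OF this] obtain g where g: "\<forall>v\<in>V. snd (g v) > 0 \<and> f v = cball (fst (g v)) (snd (g v))"
    by blast
  define c where "c = (\<lambda>v. fst (g v))"
  define \<rho> where "\<rho> = (\<lambda>v. snd (g v))"
  have cr: "\<And>v. v \<in> V \<Longrightarrow> \<rho> v > 0 \<and> f v = cball (c v) (\<rho> v)"
    using g c_def \<rho>_def by simp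
  define m where "m = Min (\<rho> ` V)"
  have "m \<in> \<rho> ` V" unfolding m_def using finV assms(2) by simp
  then obtain v0 where v0: "v0 \<in> V" "\<rho> v0 = m" by auto
  have minr: "\<And>v. v \<in> V \<Longrightarrow> \<rho> v0 \<le> \<rho> v" using v0 finV unfolding m_def by simp
  define r where "r = \<rho> v0"
  define p where "p = c v0"
  have r0: "r > 0" using cr[OF v0(1)] r_def by simp
  define N where "N = {u\<in>V. E v0 u}"
  have finN: "finite N" using finV N_def by simp
  have "min_degree V E \<le> degree V E v0"
    unfolding min_degree_def using finV v0 by simp
  also have "degree V E v0 = card N" unfolding degree_def N_def by simp
  finally have md: "min_degree V E \<le> card N" .
  have "\<forall>u\<in>N. \<exists>q. dist p q \<le> 2*r \<and> cball q r \<subseteq> f u"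
  proof
    fix u assume u: "u \<in> N"
    then have uV: "u \<in> V" and E: "E v0 u" using N_def by auto
    have "u \<noteq> v0" using E irr v0 by auto
    then have "f v0 \<inter> f u \<noteq> {}" using adj[rule_format, OF v0(1) uV] E by auto
    then obtain x where "x \<in> f v0" "x \<in> f u" by blast
    then have "dist p x \<le> r" "dist (c u) x \<le> \<rho> u" using cr[OF uV] cr[OF v0(1)] p_def r_def by auto
    then have "dist (c u) p \<le> \<rho> u + r" using dist_triangle[of "c u" p x] by (simp add: dist_commute)
    moreover have "\<rho> u \<ge> r" using minr uV r_def by simp
    ultimately obtain q0 where "dist p q0 \<le> 2*r" "cball q0 r \<subseteq> cball (c u) (\<rho> u)"
      using geo[OF r0] by blast
    then show "\<exists>q. dist p q \<le> 2*r \<and> cball q r \<subseteq> f u"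
      using cr[OF uV] by auto
  qed
  from bchoice[OF this] obtain q where q: "\<forall>u\<in>N. dist p (q u) \<le> 2*r \<and> cball (q u) r \<subseteq> f u"
    by blast
  have "card N \<le> (2 * biclique_number V E + 1) * 3 ^ DIM('a)"
  proof (rule vol[OF finN r0])
    show "\<forall>u\<in>N. dist p (q u) \<le> 2*r" using q by blast
    fix x
    show "card {u\<in>N. x \<in> cball (q u) r} \<le> 2 * biclique_number V E + 1"
    proof (rule clique_bound[OF assms(1)])
      show "{u\<in>N. x \<in> cball (q u) r} \<subseteq> V" using N_def by auto
      show "\<forall>u\<in>{u\<in>N. x \<in> cball (q u) r}. \<forall>w\<in>{u\<in>N. x \<in> cball (q u) r}. u \<noteq> w \<longrightarrow> E u w"
      proof (intro ballI impI)
        fix u w assume u: "u \<in> {u\<in>N. x \<in> cball (q u) r}" and w: "w \<in> {u\<in>N. x \<in> cball (q u) r}"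
          and "u \<noteq> w"
        have "x \<in> cball (q u) r" "x \<in> cball (q w) r" "u \<in> N" "w \<in> N" using u w by auto
        then have "x \<in> f u" "x \<in> f w" using q by blast+
        moreover have "u \<in> V" "w \<in> V" using u w N_def by auto
        ultimately show "E u w" using adj[rule_format, of u w] \<open>u \<noteq> w\<close> by auto
      qed
    qed
  qed
  with md show ?thesis by (rule le_trans)
qed

end
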